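(* Let $\Lambda\subset\mathbb{R}^2$ be a $2$-dimensional lattice and let $C\subset\mathbb{R}^2$ be a convex body that is lattice reduced or lattice complete with respect to $\Lambda$. Then $\mathrm{diam}_\Lambda(C)\le\mathrm{wdt}_\Lambda(C)$.
   Context: A lattice $\Lambda\subset\mathbb{R}^2$ is a discrete subgroup spanning $\mathbb{R}^2$; $\Lambda^\star=\{y: x\cdot y\in\mathbb{Z}\ \forall x\in\Lambda\}$. For a convex body $C$ (compact convex, non-empty interior): $\mathrm{wdt}_\Lambda(C)=\min_{y\in\Lambda^\star\setminus\{0\}}\max_{a,b\in C}y\cdot(a-b)$; a segment $[a,b]$ is a lattice segment if $b-a$ is parallel to a nonzero vector of $\Lambda$, with lattice length $|b-a|/|v|$ where $v$ generates $\Lambda\cap\mathrm{span}\{b-a\}$ and is a positive multiple of $b-a$; $\mathrm{diam}_\Lambda(C)$ is the maximum lattice length of a lattice segment in $C$. $C$ is lattice reduced if no convex body $C'\subsetneq C$ has the same lattice width, lattice complete if no convex body $C'\supsetneq C$ has the same lattice diameter. *)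

theory Defs
  imports "HOL-Analysis.Analysis"
begin

type_synonym pt = "real^2"

definition is_lattice :: "pt set \<Rightarrow> bool" where
  "is_lattice L \<longleftrightarrow>
     0 \<in> L \<and> (\<forall>x\<in>L. \<forall>y\<in>L. x + y \<in> L) \<and> (\<forall>x\<in>L. - x \<in> L) \<and>
     (\<forall>x\<in>L. \<exists>e>0. \<forall>y\<in>L. y \<noteq> x \<longrightarrow> dist y x \<ge> e) \<and>
     span L = UNIV"

definition dual_lattice :: "pt set \<Rightarrow> pt set" where
  "dual_lattice L = {y. \<forall>x\<in>L. x \<bullet> y \<in> \<int>}"

definition convex_body :: "pt set \<Rightarrow> bool" where
  "convex_body C \<longleftrightarrow> compact C \<and> convex C \<and> interior C \<noteq> {}"

definition lattice_width :: "pt set \<Rightarrow> pt set \<Rightarrow> real" where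
  "lattice_width L C =
     Inf ((\<lambda>y. Sup {y \<bullet> (a - b) | a b. a \<in> C \<and> b \<in> C}) ` (dual_lattice L - {0}))"

definition lattice_segment :: "pt set \<Rightarrow> pt \<Rightarrow> pt \<Rightarrow> bool" where
  "lattice_segment L a b \<longleftrightarrow> a \<noteq> b \<and> (\<exists>v\<in>L. v \<noteq> 0 \<and> (\<exists>c. b - a = c *\<^sub>R v))"

definition primitive_vec :: "pt set \<Rightarrow> pt \<Rightarrow> pt" where
  "primitive_vec L d = (SOME v. v \<in> L \<and> v \<noteq> 0 \<and> (\<exists>c>0. v = c *\<^sub>R d) \<and>
        L \<inter> span {d} = range (\<lambda>k::int. of_int k *\<^sub>R v))"

definition lattice_length :: "pt set \<Rightarrow> pt \<Rightarrow> pt \<Rightarrow> real" where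
  "lattice_length L a b = norm (b - a) / norm (primitive_vec L (b - a))"

definition lattice_diam :: "pt set \<Rightarrow> pt set \<Rightarrow> real" where
  "lattice_diam L C =
     Sup {lattice_length L a b | a b. lattice_segment L a b \<and> closed_segment a b \<subseteq> C}"

definition lattice_reduced :: "pt set \<Rightarrow> pt set \<Rightarrow> bool" where
  "lattice_reduced L C \<longleftrightarrow>
     (\<forall>C'. convex_body C' \<and> C' \<subset> C \<longrightarrow> lattice_width L C' \<noteq> lattice_width L C)"

definition lattice_complete :: "pt set \<Rightarrow> pt set \<Rightarrow> bool" where
  "lattice_complete L C \<longleftrightarrow>
     (\<forall>C'. convex_body C' \<and> C \<subset> C' \<longrightarrow> lattice_diam L C' \<noteq> lattice_diam L C)"

end

theory Submission
  imports Defs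
begin



lemma lat_0: "is_lattice L \<Longrightarrow> 0 \<in> L" by (simp add: is_lattice_def)
lemma lat_add: "is_lattice L \<Longrightarrow> x \<in> L \<Longrightarrow> y \<in> L \<Longrightarrow> x + y \<in> L" by (simp add: is_lattice_def)
lemma lat_neg: "is_lattice L \<Longrightarrow> x \<in> L \<Longrightarrow> - x \<in> L" by (simp add: is_lattice_def)
lemma lat_diff: "is_lattice L \<Longrightarrow> x \<in> L \<Longrightarrow> y \<in> L \<Longrightarrow> x - y \<in> L"
  using lat_add[of L x "-y"] lat_neg[of L y] by simp

lemma lat_nat_mult: "is_lattice L \<Longrightarrow> x \<in> L \<Longrightarrow> of_nat n *\<^sub>R x \<in> L"
proof (induction n)
  case 0 then show ?case by (simp add: lat_0)
next
  case (Suc n)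
  have "of_nat (Suc n) *\<^sub>R x = x + of_nat n *\<^sub>R x" by (simp add: algebra_simps)
  then show ?case using Suc lat_add by metis
qed

lemma lat_int_mult: assumes "is_lattice L" "x \<in> L" shows "of_int k *\<^sub>R x \<in> L"
proof (cases "k \<ge> 0")
  case True
  then obtain n where "k = int n" by (metis nonneg_int_cases)
  then show ?thesis using lat_nat_mult[OF assms, of n] by simp
next
  case False
  then obtain n where "k = - int n" by (metis int_cases2 linorder_not_le order_less_le_trans
       of_nat_0_le_iff)
  then have "of_int k *\<^sub>R x = - (of_nat n *\<^sub>R x)" by simp
  then show ?thesis using lat_nat_mult[OF assms, of n] lat_neg[OF assms(1)] by metis
qed

lemma lat_sep: assumes "is_lattice L" obtains e where "e > 0" "\<And>x. x \<in> L \<Longrightarrow> x \<noteq> 0 \<Longrightarrow> e \<le> norm x"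
proof -
  from assms have "\<exists>e>0. \<forall>y\<in>L. y \<noteq> 0 \<longrightarrow> dist y 0 \<ge> e" unfolding is_lattice_def by blast
  then show ?thesis using that by auto
qed

lemma lat_finite: assumes "is_lattice L" "bounded S" shows "finite (L \<inter> S)"
proof (rule ccontr)
  assume inf: "infinite (L \<inter> S)"
  obtain e where e: "e > 0" "\<And>x. x \<in> L \<Longrightarrow> x \<noteq> 0 \<Longrightarrow> e \<le> norm x" using lat_sep[OF assms(1)] by blast
  have "bounded (L \<inter> S)" using assms(2) bounded_subset by blast
  then obtain x where x: "x islimpt (L \<inter> S)" using bounded_infinite_imp_islimpt[OF order_refl _ inf] by blast
  then obtain y1 where y1: "y1 \<in> L \<inter> S" "y1 \<noteq> x" "dist y1 x < e/2"
    using e(1) unfolding islimpt_approachable by (meson half_gt_zero)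
  have "dist y1 x > 0" using y1 by simp
  then obtain y2 where y2: "y2 \<in> L \<inter> S" "y2 \<noteq> x" "dist y2 x < min (e/2) (dist y1 x)"
    using x e(1) unfolding islimpt_approachable by (metis half_gt_zero min_less_iff_conj)
  have ne: "y1 - y2 \<noteq> 0" using y2 by auto
  have "norm (y1 - y2) < e" using y1 y2 dist_triangle_half_l[of y1 x e y2]
    by (simp add: dist_norm dist_commute)
  moreover have "y1 - y2 \<in> L" using y1 y2 lat_diff[OF assms(1)] by blast
  ultimately show False using e(2) ne by fastforce
qed


definition prim_ok :: "pt set \<Rightarrow> pt \<Rightarrow> pt \<Rightarrow> bool" where
  "prim_ok L d v \<longleftrightarrow> v \<in> L \<and> v \<noteq> 0 \<and> (\<exists>c>0. v = c *\<^sub>R d) \<and>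
        L \<inter> span {d} = range (\<lambda>k::int. of_int k *\<^sub>R v)"

lemma span_scale1: "(c::real) \<noteq> 0 \<Longrightarrow> span {c *\<^sub>R d} = span {d::pt}"
proof -
  assume c: "c \<noteq> 0"
  have "range (\<lambda>k. k *\<^sub>R (c *\<^sub>R d)) = range (\<lambda>k. k *\<^sub>R d)"
  proof (intro set_eqI iffI)
    fix x assume "x \<in> range (\<lambda>k. k *\<^sub>R (c *\<^sub>R d))"
    then obtain k where "x = k *\<^sub>R (c *\<^sub>R d)" by blast
    then show "x \<in> range (\<lambda>k. k *\<^sub>R d)" by (metis rangeI scaleR_scaleR)
  next
    fix x assume "x \<in> range (\<lambda>k. k *\<^sub>R d)"
    then obtain k where "x = k *\<^sub>R d" by blast
    then have "x = (k / c) *\<^sub>R (c *\<^sub>R d)" using c by simp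
    then show "x \<in> range (\<lambda>k. k *\<^sub>R (c *\<^sub>R d))" by blast
  qed
  then show ?thesis by (simp add: span_singleton)
qed

lemma prim_exists:
  assumes L: "is_lattice L" and u: "u \<in> L" "u \<noteq> 0" "u = c *\<^sub>R d"
  shows "\<exists>v. prim_ok L d v"
proof -
  define S where "S = (L \<inter> (span {d} \<inter> cball 0 (norm u))) - {0}"
  have finS: "finite S" unfolding S_def using lat_finite[OF L, of "span {d} \<inter> cball 0 (norm u)"]
    by (simp add: bounded_Int)
  have uS: "u \<in> S" unfolding S_def using u by (simp add: span_base span_mul)
  define m where "m = Min (norm ` S)"
  have "m \<in> norm ` S" unfolding m_def using finS uS by (intro Min_in) auto
  then obtain v where vS: "v \<in> S" and vm: "norm v = m" by auto
  have minS: "\<And>x. x \<in> S \<Longrightarrow> norm v \<le> norm x" using vm finS unfolding m_def by simp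
  have vmin: "norm v \<le> norm x" if "x \<in> L" "x \<in> span {d}" "x \<noteq> 0" for x
  proof (cases "norm x \<le> norm u")
    case True then show ?thesis using minS[of x] that unfolding S_def by auto
  next
    case False then show ?thesis using minS[OF uS] by simp
  qed
  have vL: "v \<in> L" "v \<noteq> 0" "v \<in> span {d}" using vS unfolding S_def by auto
  then obtain t where t: "v = t *\<^sub>R d" by (auto simp: span_singleton)
  have t0: "t \<noteq> 0" using t vL by auto
  define w where "w = \<bar>t\<bar> *\<^sub>R d"
  have wL: "w \<in> L"
  proof (cases "t > 0")
    case True then show ?thesis using vL t w_def by simp
  next
    case False
    then have "w = - v" using t t0 w_def by simp
    then show ?thesis using lat_neg[OF L vL(1)] by simp
  qed
  have nw: "norm w = norm v" using t w_def by simp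
  have w0: "w \<noteq> 0" using nw vL by auto
  have wpos: "\<exists>c>0. w = c *\<^sub>R d" using t0 w_def by (intro exI[of _ "\<bar>t\<bar>"]) auto
  have gen: "L \<inter> span {d} = range (\<lambda>k::int. of_int k *\<^sub>R w)"
  proof (intro set_eqI iffI)
    fix x assume x: "x \<in> L \<inter> span {d}"
    then obtain s where s: "x = s *\<^sub>R d" by (auto simp: span_singleton)
    define q where "q = s / \<bar>t\<bar>"
    have xq: "x = q *\<^sub>R w" using s t0 unfolding q_def w_def by simp
    define k where "k = floor q"
    define r where "r = x - of_int k *\<^sub>R w"
    have rL: "r \<in> L" unfolding r_def using lat_diff[OF L _ lat_int_mult[OF L wL]] x by blast
    have rsp: "r \<in> span {d}" unfolding r_def using x w_def
      by (simp add: span_diff span_mul span_base)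
    have req: "r = (q - of_int k) *\<^sub>R w" unfolding r_def xq by (simp add: algebra_simps)
    have "0 \<le> q - of_int k" "q - of_int k < 1" unfolding k_def by linarith+
    then have "norm r < norm w" using req w0 by (simp add: mult_less_cancel_right1 less_le)
    then have "r = 0" using vmin[OF rL rsp] nw by fastforce
    then show "x \<in> range (\<lambda>k::int. of_int k *\<^sub>R w)" unfolding r_def by auto
  next
    fix x assume "x \<in> range (\<lambda>k::int. of_int k *\<^sub>R w)"
    then obtain k where "x = of_int k *\<^sub>R w" by blast
    then show "x \<in> L \<inter> span {d}" using lat_int_mult[OF L wL] w_def
      by (simp add: span_mul span_base)
  qed
  show ?thesis using wL w0 wpos gen unfolding prim_ok_def by blast
qed

lemma prim_vec_ok:
  assumes "is_lattice L" "u \<in> L" "u \<noteq> 0" "u = c *\<^sub>R d"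
  shows "prim_ok L d (primitive_vec L d)"
  using prim_exists[OF assms] unfolding primitive_vec_def prim_ok_def
  by (rule someI_ex)

lemma prim_norm_eq:
  assumes "prim_ok L d v" "prim_ok L d' v'" "span {d} = span {d'}"
  shows "norm v = norm v'"
proof -
  have v'in: "v' \<in> L \<inter> span {d}" using assms unfolding prim_ok_def
    by (auto simp: span_mul span_base)
  have vin: "v \<in> L \<inter> span {d'}" using assms unfolding prim_ok_def
    by (auto simp: span_mul span_base)
  obtain k :: int where k: "v' = of_int k *\<^sub>R v" using v'in assms(1) unfolding prim_ok_def by auto
  obtain k' :: int where k': "v = of_int k' *\<^sub>R v'" using vin assms(2) unfolding prim_ok_def by auto
  have "v = of_int (k' * k) *\<^sub>R v" using k k' by (metis scaleR_scaleR of_int_mult)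
  then have "(of_int (k' * k) - 1) *\<^sub>R v = 0" by (simp add: algebra_simps)
  then have "real_of_int (k' * k) = 1" using assms(1) unfolding prim_ok_def by simp
  then have "k' * k = 1" by linarith
  then have "\<bar>k\<bar> = 1" by (metis abs_1 abs_mult abs_ge_zero zero_less_mult_iff zmult_eq_1_iff abs_minus_cancel)
  then have "\<bar>real_of_int k\<bar> = 1" by (metis of_int_1 of_int_abs)
  then show ?thesis using k by simp
qed

lemma seg_prim:
  assumes L: "is_lattice L" and s: "lattice_segment L a b"
  shows "prim_ok L (b - a) (primitive_vec L (b - a))"
proof -
  obtain v c where v: "v \<in> L" "v \<noteq> 0" "b - a = c *\<^sub>R v" and ab: "a \<noteq> b"
    using s unfolding lattice_segment_def by blast
  have "c \<noteq> 0" using v ab by auto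
  then have "v = (1/c) *\<^sub>R (b - a)" using v by simp
  then show ?thesis using prim_vec_ok[OF L v(1,2)] by blast
qed




definition wid :: "pt set \<Rightarrow> pt \<Rightarrow> real" where
  "wid C y = Sup {y \<bullet> (a - b) | a b. a \<in> C \<and> b \<in> C}"

definition Dset :: "pt set \<Rightarrow> pt set \<Rightarrow> real set" where
  "Dset L C = {lattice_length L a b | a b. lattice_segment L a b \<and> closed_segment a b \<subseteq> C}"

lemma lw_eq: "lattice_width L C = Inf (wid C ` (dual_lattice L - {0}))"
  by (simp add: lattice_width_def wid_def)

lemma ld_eq: "lattice_diam L C = Sup (Dset L C)"
  by (simp add: lattice_diam_def Dset_def)

lemma wid_ge: assumes "bounded C" "a \<in> C" "b \<in> C" shows "y \<bullet> (a - b) \<le> wid C y"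
proof -
  obtain B where B: "\<And>x. x \<in> C \<Longrightarrow> norm x \<le> B" using assms(1) bounded_iff by blast
  have "y \<bullet> (a' - b') \<le> norm y * (2 * B)" if "a' \<in> C" "b' \<in> C" for a' b'
  proof -
    have "y \<bullet> (a' - b') \<le> norm y * norm (a' - b')" by (metis Cauchy_Schwarz_ineq2 abs_le_D1)
    also have "norm (a' - b') \<le> 2 * B" using B[OF that(1)] B[OF that(2)] norm_triangle_ineq4[of a' b'] by linarith
    then have "norm y * norm (a' - b') \<le> norm y * (2 * B)" by (simp add: mult_left_mono)
    finally show ?thesis .
  qed
  then have "bdd_above {y \<bullet> (a - b) | a b. a \<in> C \<and> b \<in> C}" unfolding bdd_above_def by blast
  then show ?thesis unfolding wid_def using assms by (intro cSup_upper) auto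
qed

lemma wid_le: assumes "C \<noteq> {}" "\<And>a b. a \<in> C \<Longrightarrow> b \<in> C \<Longrightarrow> y \<bullet> (a - b) \<le> M" shows "wid C y \<le> M"
proof -
  obtain x where "x \<in> C" using assms(1) by blast
  then have "{y \<bullet> (a - b) | a b. a \<in> C \<and> b \<in> C} \<noteq> {}" by blast
  then show ?thesis unfolding wid_def using assms(2) by (intro cSup_least) auto
qed

lemma wid_abs: assumes "bounded C" "a \<in> C" "b \<in> C" shows "\<bar>y \<bullet> (a - b)\<bar> \<le> wid C y"
proof -
  have "y \<bullet> (b - a) = - (y \<bullet> (a - b))" by (simp add: inner_diff_right)
  then show ?thesis using wid_ge[OF assms, of y] wid_ge[OF assms(1,3,2), of y] by linarith
qed

lemma wid_nonneg: assumes "bounded C" "C \<noteq> {}" shows "0 \<le> wid C y"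
  using assms wid_ge[OF assms(1), of _ _ y] by fastforce

lemma lemA:
  assumes L: "is_lattice L" and C: "bounded C" and s: "lattice_segment L a b" "closed_segment a b \<subseteq> C"
    and y: "y \<in> dual_lattice L" "y \<bullet> (b - a) \<noteq> 0"
  shows "lattice_length L a b \<le> wid C y"
proof -
  define p where "p = primitive_vec L (b - a)"
  have po: "prim_ok L (b - a) p" unfolding p_def using seg_prim[OF L s(1)] .
  then obtain c where c: "c > 0" "p = c *\<^sub>R (b - a)" "p \<in> L" unfolding prim_ok_def by blast
  have "p \<bullet> y \<in> \<int>" using y(1) c(3) unfolding dual_lattice_def by blast
  then obtain n where n: "p \<bullet> y = of_int n" by (auto elim: Ints_cases)
  have "p \<bullet> y = c * (y \<bullet> (b - a))" using c by (simp add: inner_commute)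
  then have "n \<noteq> 0" using n c y(2) by auto
  then have "1 \<le> \<bar>p \<bullet> y\<bar>" using n by linarith
  then have "1 \<le> c * \<bar>y \<bullet> (b - a)\<bar>" using \<open>p \<bullet> y = c * (y \<bullet> (b - a))\<close> c by (simp add: abs_mult)
  then have ge: "1 / c \<le> \<bar>y \<bullet> (b - a)\<bar>" using c by (simp add: field_simps)
  have ab: "a \<noteq> b" using s unfolding lattice_segment_def by blast
  have "lattice_length L a b = norm (b - a) / (c * norm (b - a))"
    unfolding lattice_length_def p_def[symmetric] using c by simp
  also have "\<dots> = 1 / c" using ab by simp
  finally have "lattice_length L a b = 1 / c" .
  moreover have "\<bar>y \<bullet> (b - a)\<bar> \<le> wid C y" using wid_abs[OF C] s(2) by auto
  ultimately show ?thesis using ge by linarith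
qed

lemma perp2:
  fixes u v w :: pt
  assumes "u \<noteq> 0" "v \<noteq> 0" "u \<bullet> v = 0" "u \<bullet> w = 0"
  shows "\<exists>k. w = k *\<^sub>R v"
proof -
  have u: "u$1 \<noteq> 0 \<or> u$2 \<noteq> 0"
  proof (rule ccontr)
    assume "\<not> ?thesis" then have "u = 0" by (simp add: vec_eq_iff forall_2)
    then show False using assms(1) by simp
  qed
  have v: "v$1 \<noteq> 0 \<or> v$2 \<noteq> 0"
  proof (rule ccontr)
    assume "\<not> ?thesis" then have "v = 0" by (simp add: vec_eq_iff forall_2)
    then show False using assms(2) by simp
  qed
  have e1: "u$1 * v$1 + u$2 * v$2 = 0" using assms(3) by (simp add: inner_vec_def sum_2)
  have e2: "u$1 * w$1 + u$2 * w$2 = 0" using assms(4) by (simp add: inner_vec_def sum_2)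
  show ?thesis
  proof (cases "u$1 \<noteq> 0")
    case True
    have v2: "v$2 \<noteq> 0"
    proof
      assume "v$2 = 0" then have "v$1 = 0" using e1 True by simp
      then show False using v \<open>v$2 = 0\<close> by simp
    qed
    have "v$1 = - u$2 * v$2 / u$1" "w$1 = - u$2 * w$2 / u$1" using e1 e2 True by (simp_all add: field_simps)
    then have "w = (w$2 / v$2) *\<^sub>R v" using v2 by (simp add: vec_eq_iff forall_2 field_simps)
    then show ?thesis by blast
  next
    case False
    then have u2: "u$2 \<noteq> 0" using u by simp
    then have v1: "v$1 \<noteq> 0" using v e1 False by auto
    have "v$2 = 0" "w$2 = 0" using e1 e2 False u2 by auto
    then have "w = (w$1 / v$1) *\<^sub>R v" using v1 by (simp add: vec_eq_iff forall_2 field_simps)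
    then show ?thesis by blast
  qed
qed

lemma Dset_bdd:
  assumes L: "is_lattice L" and C: "bounded C" shows "bdd_above (Dset L C)"
proof -
  obtain e where e: "e > 0" "\<And>x. x \<in> L \<Longrightarrow> x \<noteq> 0 \<Longrightarrow> e \<le> norm x" using lat_sep[OF L] by blast
  obtain B where B: "\<And>x. x \<in> C \<Longrightarrow> norm x \<le> B" using C bounded_iff by blast
  have "l \<le> 2 * B / e" if lD: "l \<in> Dset L C" for l
  proof -
    obtain a b where ab: "l = lattice_length L a b" "lattice_segment L a b" "closed_segment a b \<subseteq> C"
      using lD unfolding Dset_def by blast
    have po: "prim_ok L (b - a) (primitive_vec L (b - a))" using seg_prim[OF L ab(2)] .
    then have pe: "e \<le> norm (primitive_vec L (b - a))" using e(2) unfolding prim_ok_def by blast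
    have "a \<in> C" "b \<in> C" using ab(3) by auto
    then have "norm (b - a) \<le> 2 * B" using B[of a] B[of b] norm_triangle_ineq4[of b a] by linarith
    then have "norm (b - a) / norm (primitive_vec L (b - a)) \<le> 2 * B / e"
      using pe e(1) B[OF \<open>a \<in> C\<close>] by (intro frac_le) (auto intro: order_trans[OF norm_ge_zero])
    then show ?thesis using ab(1) unfolding lattice_length_def by simp
  qed
  then show ?thesis unfolding bdd_above_def by blast
qed

lemma lat_nonzero: assumes L: "is_lattice L" obtains v where "v \<in> L" "v \<noteq> 0"
proof -
  have "\<exists>v\<in>L. v \<noteq> 0"
  proof (rule ccontr)
    assume "\<not> ?thesis"
    then have "L \<subseteq> {0}" by auto
    then have "span L \<subseteq> span {0}" by (rule span_mono)
    then have "(UNIV::pt set) \<subseteq> {0}" using L unfolding is_lattice_def by simp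
    moreover have "(vector [1, 0] :: pt) \<noteq> 0"
    proof
      assume "(vector [1, 0] :: pt) = 0"
      then have "(vector [1, 0] :: pt) $ 1 = 0" by simp
      then show False by simp
    qed
    ultimately show False by auto
  qed
  then show ?thesis using that by blast
qed

lemma Dset_ne:
  assumes L: "is_lattice L" and C: "interior C \<noteq> {}" shows "Dset L C \<noteq> {}"
proof -
  obtain v where v: "v \<in> L" "v \<noteq> 0" using lat_nonzero[OF L] by blast
  obtain x where "x \<in> interior C" using C by blast
  then obtain r where r: "r > 0" "ball x r \<subseteq> C" using mem_interior by blast
  define b where "b = x + (r / (2 * norm v)) *\<^sub>R v"
  have "norm (b - x) = r / 2" unfolding b_def using v r by simp
  then have "b \<in> ball x r" using r by (simp add: dist_norm norm_minus_commute)
  then have "closed_segment x b \<subseteq> ball x r" using r by (intro closed_segment_subset) auto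
  then have sub: "closed_segment x b \<subseteq> C" using r by blast
  have "lattice_segment L x b" unfolding lattice_segment_def using v r \<open>norm (b - x) = r / 2\<close>
    by (auto simp: b_def)
  then show ?thesis using sub unfolding Dset_def by blast
qed




definition det2 :: "pt \<Rightarrow> pt \<Rightarrow> real" where "det2 u v = u$1 * v$2 - u$2 * v$1"

lemma det2_lin: "det2 (a *\<^sub>R u + b *\<^sub>R v) w = a * det2 u w + b * det2 v w"
  by (simp add: det2_def algebra_simps)

lemma det2_self: "det2 u u = 0" by (simp add: det2_def)

lemma lat_indep: assumes L: "is_lattice L" obtains u1 u2 where "u1 \<in> L" "u2 \<in> L" "det2 u1 u2 \<noteq> 0"
proof -
  obtain u1 where u1: "u1 \<in> L" "u1 \<noteq> 0" using lat_nonzero[OF L] by blast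
  have "\<exists>u2\<in>L. det2 u1 u2 \<noteq> 0"
  proof (rule ccontr)
    assume "\<not> ?thesis"
    then have sub: "L \<subseteq> {x. det2 u1 x = 0}" by auto
    have "subspace {x. det2 u1 x = 0}" unfolding subspace_def det2_def by (auto simp: algebra_simps)
    then have "span L \<subseteq> {x. det2 u1 x = 0}" using sub by (rule span_minimal[rotated])
    then have all: "\<And>x. det2 u1 x = 0" using L unfolding is_lattice_def by auto
    have nz: "u1$1 \<noteq> 0 \<or> u1$2 \<noteq> 0"
    proof (rule ccontr)
      assume "\<not> ?thesis" then have "u1 = 0" by (simp add: vec_eq_iff forall_2)
      then show False using u1 by simp
    qed
    have "det2 u1 (vector [- u1$2, u1$1]) = u1$1 * u1$1 + u1$2 * u1$2" by (simp add: det2_def)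
    also have "\<dots> > 0" using nz by (metis add_pos_nonneg add_nonneg_pos not_real_square_gt_zero zero_le_square)
    finally show False using all by simp
  qed
  then show ?thesis using that u1 by blast
qed

lemma cramer: assumes "det2 u1 u2 \<noteq> 0"
  shows "x = (det2 x u2 / det2 u1 u2) *\<^sub>R u1 + (det2 u1 x / det2 u1 u2) *\<^sub>R u2"
proof -
  define \<delta> where "\<delta> = det2 u1 u2"
  have c: "x$i = (det2 x u2 / \<delta>) * u1$i + (det2 u1 x / \<delta>) * u2$i" if "i = 1 \<or> i = 2" for i
  proof -
    have e: "det2 x u2 * u1$i + det2 u1 x * u2$i = \<delta> * x$i"
      using that unfolding \<delta>_def det2_def by (auto simp: algebra_simps)
    have "(det2 x u2 / \<delta>) * u1$i + (det2 u1 x / \<delta>) * u2$i = (det2 x u2 * u1$i + det2 u1 x * u2$i) / \<delta>"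
      by (simp add: add_divide_distrib)
    also have "\<dots> = x$i" using e assms \<delta>_def by simp
    finally show ?thesis by simp
  qed
  show ?thesis unfolding \<delta>_def[symmetric] using c by (simp add: vec_eq_iff forall_2)
qed

lemma dual_nonzero: assumes L: "is_lattice L" shows "\<exists>y \<in> dual_lattice L. y \<noteq> 0"
proof -
  obtain u1 u2 where u: "u1 \<in> L" "u2 \<in> L" and dn: "det2 u1 u2 \<noteq> 0" using lat_indep[OF L] by blast
  define \<delta> where "\<delta> = det2 u1 u2"
  have \<delta>: "\<delta> \<noteq> 0" using dn \<delta>_def by simp
  define P where "P = {s *\<^sub>R u1 + t *\<^sub>R u2 | s t. 0 \<le> s \<and> s < 1 \<and> 0 \<le> t \<and> t < 1}"
  have "P \<subseteq> cball 0 (norm u1 + norm u2)"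
  proof
    fix z assume "z \<in> P"
    then obtain s t where st: "z = s *\<^sub>R u1 + t *\<^sub>R u2" "0 \<le> s" "s < 1" "0 \<le> t" "t < 1"
      unfolding P_def by blast
    have "norm z \<le> norm (s *\<^sub>R u1) + norm (t *\<^sub>R u2)" using st(1) norm_triangle_ineq by blast
    also have "\<dots> = s * norm u1 + t * norm u2" using st by simp
    also have "\<dots> \<le> norm u1 + norm u2" using st
      by (intro add_mono) (auto intro: mult_left_le_one_le)
    finally show "z \<in> cball 0 (norm u1 + norm u2)" by simp
  qed
  then have "bounded P" using bounded_cball bounded_subset by blast
  define F where "F = L \<inter> P"
  have finF: "finite F" unfolding F_def using lat_finite[OF L \<open>bounded P\<close>] .
  define N :: nat where "N = fact (card F)"
  have key: "real N * (det2 x u2 / \<delta>) \<in> \<int>" if x: "x \<in> L" for x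
  proof -
    define s where "s = det2 x u2 / \<delta>"
    define t where "t = det2 u1 x / \<delta>"
    have xst: "x = s *\<^sub>R u1 + t *\<^sub>R u2" unfolding s_def t_def \<delta>_def using cramer[OF dn] .
    define g where "g = (\<lambda>k::nat. real k * s - of_int \<lfloor>real k * s\<rfloor>)"
    define h where "h = (\<lambda>k::nat. real k * t - of_int \<lfloor>real k * t\<rfloor>)"
    define r where "r = (\<lambda>k::nat. g k *\<^sub>R u1 + h k *\<^sub>R u2)"
    have rL: "r k \<in> L" for k
    proof -
      have "r k = real k *\<^sub>R x - of_int \<lfloor>real k * s\<rfloor> *\<^sub>R u1 - of_int \<lfloor>real k * t\<rfloor> *\<^sub>R u2"
        unfolding r_def g_def h_def xst by (simp add: algebra_simps)
      moreover have "real k *\<^sub>R x \<in> L" using lat_nat_mult[OF L x] .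
      ultimately show ?thesis using lat_diff[OF L] lat_int_mult[OF L] u by metis
    qed
    have rP: "r k \<in> P" for k
    proof -
      have "0 \<le> g k" "g k < 1" "0 \<le> h k" "h k < 1" unfolding g_def h_def by linarith+
      then show ?thesis unfolding P_def r_def by blast
    qed
    have rF: "r ` {0..card F} \<subseteq> F" using rL rP unfolding F_def by blast
    have "\<not> inj_on r {0..card F}"
    proof
      assume "inj_on r {0..card F}"
      from card_inj_on_le[OF this rF finF] show False by simp
    qed
    then obtain i j where ij: "i \<in> {0..card F}" "j \<in> {0..card F}" "i \<noteq> j" "r i = r j"
      unfolding inj_on_def by blast
    have gdet: "det2 (r k) u2 = g k * \<delta>" for k
      unfolding r_def det2_lin det2_self \<delta>_def by simp
    have geq: "g i = g j" using gdet[of i] gdet[of j] ij(4) \<delta> by simp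
    obtain m :: nat where m: "1 \<le> m" "m \<le> card F" "real m * s \<in> \<int>"
    proof (cases "i < j")
      case True
      have "real (j - i) * s = of_int (\<lfloor>real j * s\<rfloor> - \<lfloor>real i * s\<rfloor>)"
        using geq True unfolding g_def by (simp add: of_nat_diff algebra_simps)
      then show ?thesis using that[of "j - i"] True ij by auto
    next
      case False
      then have "j < i" using ij by simp
      have "real (i - j) * s = of_int (\<lfloor>real i * s\<rfloor> - \<lfloor>real j * s\<rfloor>)"
        using geq \<open>j < i\<close> unfolding g_def by (simp add: of_nat_diff algebra_simps)
      then show ?thesis using that[of "i - j"] \<open>j < i\<close> ij by auto
    qed
    have "m dvd N" unfolding N_def using m by (simp add: dvd_fact)
    then obtain q where "N = m * q" by blast
    then have "real N * s = real q * (real m * s)" by simp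
    moreover have "real q * (real m * s) \<in> \<int>" by (rule Ints_mult[OF Ints_of_nat m(3)])
    ultimately have "real N * s \<in> \<int>" by metis
    then show ?thesis unfolding s_def .
  qed
  define y where "y = (real N / \<delta>) *\<^sub>R (vector [u2$2, - u2$1] :: pt)"
  have ydual: "y \<in> dual_lattice L"
  proof -
    have "x \<bullet> y = real N * (det2 x u2 / \<delta>)" for x
      unfolding y_def det2_def using \<delta> by (simp add: inner_vec_def sum_2 field_simps)
    then show ?thesis unfolding dual_lattice_def using key by auto
  qed
  have "u2 \<noteq> 0" using dn by (auto simp: det2_def)
  then have "u2$1 \<noteq> 0 \<or> u2$2 \<noteq> 0" by (metis (mono_tags) exhaust_2 vec_eq_iff zero_index)
  moreover have "real N \<noteq> 0" unfolding N_def by simp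
  ultimately have "y \<noteq> 0" unfolding y_def using \<delta>
    by (auto simp: vec_eq_iff forall_2)
  then show ?thesis using ydual by blast
qed




definition rot :: "pt \<Rightarrow> pt" where "rot w = vector [- w$2, w$1]"

lemma rot_inner: "rot w \<bullet> w = 0"
  by (simp add: rot_def inner_vec_def sum_2)

lemma rot_nz: "w \<noteq> 0 \<Longrightarrow> rot w \<noteq> 0"
proof
  assume "w \<noteq> 0" "rot w = 0"
  then have "(rot w)$1 = 0" "(rot w)$2 = 0" by simp_all
  then have "w$2 = 0" "w$1 = 0" unfolding rot_def by simp_all
  then show False using \<open>w \<noteq> 0\<close> by (simp add: vec_eq_iff forall_2)
qed

lemma width_facts:
  assumes L: "is_lattice L" and C: "convex_body C"
  shows "dual_lattice L - {0} \<noteq> {}" "bdd_below (wid C ` (dual_lattice L - {0}))"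
    "0 \<le> lattice_width L C"
    "\<And>y. y \<in> dual_lattice L - {0} \<Longrightarrow> lattice_width L C \<le> wid C y"
proof -
  have bC: "bounded C" "C \<noteq> {}" using C unfolding convex_body_def
    using compact_imp_bounded interior_subset by blast+
  show ne: "dual_lattice L - {0} \<noteq> {}" using dual_nonzero[OF L] by blast
  show bb: "bdd_below (wid C ` (dual_lattice L - {0}))"
    using wid_nonneg[OF bC] unfolding bdd_below_def by blast
  show "0 \<le> lattice_width L C" unfolding lw_eq using ne wid_nonneg[OF bC]
    by (intro cInf_greatest) auto
  show "\<And>y. y \<in> dual_lattice L - {0} \<Longrightarrow> lattice_width L C \<le> wid C y"
    unfolding lw_eq using bb by (intro cInf_lower) auto
qed

lemma common:
  assumes L: "is_lattice L" and C: "convex_body C" and lt: "lattice_width L C < lattice_diam L C"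
  obtains a b y0 where "lattice_segment L a b" "closed_segment a b \<subseteq> C"
    "y0 \<in> dual_lattice L" "y0 \<noteq> 0" "wid C y0 < lattice_length L a b" "y0 \<bullet> (b - a) = 0"
    "lattice_width L C < lattice_length L a b" "lattice_length L a b \<le> lattice_diam L C"
proof -
  have bC: "bounded C" "interior C \<noteq> {}" using C unfolding convex_body_def
    using compact_imp_bounded by blast+
  have "\<exists>l\<in>Dset L C. lattice_width L C < l"
    using lt unfolding ld_eq using less_cSup_iff[OF Dset_ne[OF L bC(2)] Dset_bdd[OF L bC(1)]] by blast
  then obtain a b where ab: "lattice_segment L a b" "closed_segment a b \<subseteq> C"
     "lattice_width L C < lattice_length L a b" unfolding Dset_def by blast
  have le: "lattice_length L a b \<le> lattice_diam L C" unfolding ld_eq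
    using ab Dset_bdd[OF L bC(1)] by (intro cSup_upper) (auto simp: Dset_def)
  have ne': "wid C ` (dual_lattice L - {0}) \<noteq> {}" using width_facts(1)[OF L C] by blast
  have "Inf (wid C ` (dual_lattice L - {0})) < lattice_length L a b" using ab(3) lw_eq by simp
  from this[unfolded cInf_less_iff[OF ne' width_facts(2)[OF L C]]]
  have "\<exists>w\<in>wid C ` (dual_lattice L - {0}). w < lattice_length L a b" .
  then obtain y0 where y0: "y0 \<in> dual_lattice L" "y0 \<noteq> 0" "wid C y0 < lattice_length L a b" by blast
  have "y0 \<bullet> (b - a) = 0"
  proof (rule ccontr)
    assume "y0 \<bullet> (b - a) \<noteq> 0"
    from lemA[OF L bC(1) ab(1,2) y0(1) this] y0(3) show False by linarith
  qed
  then show ?thesis using that ab y0 le by blast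
qed




lemma reduced_case:
  assumes L: "is_lattice L" and C: "convex_body C" and lt: "lattice_width L C < lattice_diam L C"
  shows "\<not> lattice_reduced L C"
proof -
  obtain a b y0 where ab: "lattice_segment L a b" "closed_segment a b \<subseteq> C"
    and y0: "y0 \<in> dual_lattice L" "y0 \<noteq> 0" "wid C y0 < lattice_length L a b" "y0 \<bullet> (b - a) = 0"
    and Wl: "lattice_width L C < lattice_length L a b" and Dl: "lattice_length L a b \<le> lattice_diam L C"
    by (rule common[OF L C lt])
  define W where "W = lattice_width L C"
  define l where "l = lattice_length L a b"
  have cC: "compact C" "convex C" "interior C \<noteq> {}" using C unfolding convex_body_def by auto
  have bC: "bounded C" using cC compact_imp_bounded by blast
  have W0: "0 \<le> W" unfolding W_def using width_facts[OF L C] by blast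
  have Wl': "W < l" using Wl unfolding W_def l_def .
  have ab0: "a \<noteq> b" using ab unfolding lattice_segment_def by blast
  have d0: "b - a \<noteq> 0" using ab0 by simp
  have Cne: "C \<noteq> {}" using cC interior_subset by blast
  have n1: "C \<times> C \<noteq> {}" using Cne by simp
  have n2: "compact (C \<times> C)" using cC by (simp add: compact_Times)
  have n3: "continuous_on (C \<times> C) (\<lambda>z. y0 \<bullet> (fst z - snd z))" by (intro continuous_intros)
  from continuous_attains_sup[OF n2 n1 n3] obtain z where
     z: "z \<in> C \<times> C" "\<forall>z'\<in> C \<times> C. y0 \<bullet> (fst z' - snd z') \<le> y0 \<bullet> (fst z - snd z)"
    by blast
  define p where "p = fst z"
  define q where "q = snd z"
  have pq: "p \<in> C" "q \<in> C" using z(1) unfolding p_def q_def by auto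
  have w0: "wid C y0 = y0 \<bullet> (p - q)"
  proof (rule antisym)
    show "wid C y0 \<le> y0 \<bullet> (p - q)" using z(2) Cne unfolding p_def q_def
      by (intro wid_le) auto
    show "y0 \<bullet> (p - q) \<le> wid C y0" using wid_ge[OF bC pq] .
  qed
  obtain c where c: "c \<in> interior C" using cC by blast
  then obtain r where r: "r > 0" "ball c r \<subseteq> C" using mem_interior by blast
  have cinC: "c \<in> C" using c interior_subset by blast
  define lam0 where "lam0 = (W + l) / (2 * l)"
  have lpos: "l > 0" using W0 Wl' by linarith
  have lam: "0 < lam0" "lam0 < 1" "lam0 * l = (W + l) / 2" unfolding lam0_def using lpos W0 Wl'
    by (auto simp: field_simps)
  define K where "K = (\<lambda>x. lam0 *\<^sub>R x + (1 - lam0) *\<^sub>R c) ` C"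
  define C' where "C' = convex hull ({p, q} \<union> K)"
  have KC: "K \<subseteq> C"
  proof
    fix x assume "x \<in> K"
    then obtain x0 where x0: "x0 \<in> C" "x = lam0 *\<^sub>R x0 + (1 - lam0) *\<^sub>R c" unfolding K_def by blast
    show "x \<in> C" using convexD[OF cC(2) x0(1) cinC, of lam0 "1 - lam0"] lam x0(2) by simp
  qed
  have sub: "{p, q} \<union> K \<subseteq> C'" unfolding C'_def by (rule hull_subset)
  have KC': "K \<subseteq> C'" using sub by simp
  have pqC': "p \<in> C'" "q \<in> C'" using sub by simp_all
  have C'C: "C' \<subseteq> C" unfolding C'_def using KC pq cC(2) by (intro hull_minimal) simp_all
  have compK: "compact K" unfolding K_def using cC(1) by (intro compact_continuous_image continuous_intros)
  have compC': "compact C'" unfolding C'_def using compK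
    by (intro compact_convex_hull compact_Un) auto
  have bC': "bounded C'" using compC' compact_imp_bounded by blast
  have C'ne: "C' \<noteq> {}" using pqC' by blast
  have "ball c (lam0 * r) \<subseteq> K"
  proof
    fix x assume x: "x \<in> ball c (lam0 * r)"
    define x' where "x' = c + (1 / lam0) *\<^sub>R (x - c)"
    have "dist c x' = norm (x - c) / lam0" unfolding x'_def dist_norm using lam by simp
    also have "\<dots> < r" using x lam by (simp add: dist_norm norm_minus_commute field_simps)
    finally have "x' \<in> C" using r by auto
    moreover have "x = lam0 *\<^sub>R x' + (1 - lam0) *\<^sub>R c" unfolding x'_def using lam by (simp add: algebra_simps)
    ultimately show "x \<in> K" unfolding K_def by blast
  qed
  then have "c \<in> interior C'" using KC' lam r by (meson mem_interior mult_pos_pos order_trans)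
  then have intC': "interior C' \<noteq> {}" by blast
  have cbC': "convex_body C'" unfolding convex_body_def using compC' intC' C'_def by simp
  have "C' \<noteq> C"
  proof -
    define u0 where "u0 = (if p = q then vector [1, 0] else rot (p - q))"
    have u0nz: "u0 \<noteq> 0"
    proof (cases "p = q")
      case True
      have "(vector [1, 0] :: pt) \<noteq> 0"
      proof
        assume "(vector [1, 0] :: pt) = 0"
        then have "(vector [1, 0] :: pt) $ 1 = 0" by simp
        then show False by simp
      qed
      then show ?thesis unfolding u0_def using True by simp
    next
      case False then show ?thesis unfolding u0_def using rot_nz by simp
    qed
    have u0pq: "u0 \<bullet> p = u0 \<bullet> q"
    proof (cases "p = q")
      case False
      then have "u0 \<bullet> (p - q) = 0" unfolding u0_def using rot_inner by simp
      then show ?thesis by (simp add: inner_diff_right)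
    qed simp
    define \<epsilon> where "\<epsilon> = r / (2 * norm u0)"
    have \<epsilon>: "\<epsilon> > 0" unfolding \<epsilon>_def using r u0nz by simp
    have inb: "c + t *\<^sub>R u0 \<in> C" if "\<bar>t\<bar> \<le> \<epsilon>" for t
    proof -
      have "norm (t *\<^sub>R u0) \<le> \<epsilon> * norm u0" using that by (simp add: mult_right_mono)
      also have "\<dots> < r" unfolding \<epsilon>_def using u0nz r by simp
      finally have "c + t *\<^sub>R u0 \<in> ball c r" by (simp add: dist_norm)
      then show ?thesis using r by blast
    qed
    have sq: "u0 \<bullet> u0 > 0" using u0nz by simp
    have i1: "c + \<epsilon> *\<^sub>R u0 \<in> C" using inb[of \<epsilon>] \<epsilon> by simp
    have i2: "c + (-\<epsilon>) *\<^sub>R u0 \<in> C" using inb[of "-\<epsilon>"] \<epsilon> by simp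
    obtain u where u: "u \<noteq> 0" "u \<bullet> p = u \<bullet> q" "\<exists>x\<in>C. u \<bullet> x > u \<bullet> p" "c + \<epsilon> *\<^sub>R u \<in> C"
    proof (cases "u0 \<bullet> (c + \<epsilon> *\<^sub>R u0) > u0 \<bullet> p")
      case True
      have "\<exists>x\<in>C. u0 \<bullet> x > u0 \<bullet> p" using True i1 by blast
      then show ?thesis using that[of u0] u0nz u0pq i1 by blast
    next
      case False
      have e1: "u0 \<bullet> (c + \<epsilon> *\<^sub>R u0) = u0 \<bullet> c + \<epsilon> * (u0 \<bullet> u0)" by (simp add: algebra_simps)
      have e2: "(-u0) \<bullet> (c + (-\<epsilon>) *\<^sub>R u0) = - (u0 \<bullet> c) + \<epsilon> * (u0 \<bullet> u0)" by (simp add: algebra_simps)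
      have "\<epsilon> * (u0 \<bullet> u0) > 0" using \<epsilon> sq by simp
      then have "(-u0) \<bullet> (c + (-\<epsilon>) *\<^sub>R u0) > (-u0) \<bullet> p" using False e1 e2 by simp
      then have ex: "\<exists>x\<in>C. (-u0) \<bullet> x > (-u0) \<bullet> p" using i2 by blast
      have "c + \<epsilon> *\<^sub>R (-u0) \<in> C" using i2 by simp
      moreover have "-u0 \<noteq> 0" "(-u0) \<bullet> p = (-u0) \<bullet> q" using u0nz u0pq by simp_all
      ultimately show ?thesis using that[of "-u0"] ex by blast
    qed
    have "continuous_on C (\<lambda>x. u \<bullet> x)" by (intro continuous_intros)
    from continuous_attains_sup[OF cC(1) Cne this] obtain m where m: "m \<in> C" "\<forall>x\<in>C. u \<bullet> x \<le> u \<bullet> m"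
      by blast
    obtain x1 where x1: "x1 \<in> C" "u \<bullet> x1 > u \<bullet> p" using u(3) by blast
    have mp: "u \<bullet> m > u \<bullet> p" using x1 m(2) by fastforce
    have e3: "u \<bullet> (c + \<epsilon> *\<^sub>R u) = u \<bullet> c + \<epsilon> * (u \<bullet> u)" by (simp add: algebra_simps)
    have "u \<bullet> u > 0" using u(1) by simp
    then have "\<epsilon> * (u \<bullet> u) > 0" using \<epsilon> by simp
    moreover have "u \<bullet> (c + \<epsilon> *\<^sub>R u) \<le> u \<bullet> m" using m(2) u(4) by blast
    ultimately have mc: "u \<bullet> m > u \<bullet> c" using e3 by linarith
    define \<beta> where "\<beta> = max (u \<bullet> p) (lam0 * (u \<bullet> m) + (1 - lam0) * (u \<bullet> c))"
    have "(1 - lam0) * (u \<bullet> c) < (1 - lam0) * (u \<bullet> m)" using lam mc by simp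
    moreover have "lam0 * (u \<bullet> m) + (1 - lam0) * (u \<bullet> m) = u \<bullet> m" by (simp add: algebra_simps)
    ultimately have \<beta>m: "\<beta> < u \<bullet> m" unfolding \<beta>_def using mp by linarith
    have Kb: "u \<bullet> y \<le> \<beta>" if yK: "y \<in> K" for y
    proof -
      obtain x where x: "x \<in> C" "y = lam0 *\<^sub>R x + (1 - lam0) *\<^sub>R c" using yK unfolding K_def by blast
      have "u \<bullet> y = lam0 * (u \<bullet> x) + (1 - lam0) * (u \<bullet> c)" unfolding x(2) by (simp add: inner_add_right)
      also have "\<dots> \<le> lam0 * (u \<bullet> m) + (1 - lam0) * (u \<bullet> c)" using bspec[OF m(2) x(1)] lam by simp
      finally show ?thesis unfolding \<beta>_def by linarith
    qed
    have "u \<bullet> p \<le> \<beta>" "u \<bullet> q \<le> \<beta>" unfolding \<beta>_def using u(2) by simp_all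
    then have "{p, q} \<union> K \<subseteq> {x. u \<bullet> x \<le> \<beta>}" using Kb by blast
    then have "C' \<subseteq> {x. u \<bullet> x \<le> \<beta>}" unfolding C'_def by (intro hull_minimal convex_halfspace_le)
    then have "m \<notin> C'" using \<beta>m by auto
    then show ?thesis using m(1) by blast
  qed
  then have psub: "C' \<subset> C" using C'C by blast
  have wle: "wid C' y \<le> wid C y" for y
  proof (rule wid_le[OF C'ne])
    fix a' b' assume "a' \<in> C'" "b' \<in> C'"
    then have "a' \<in> C" "b' \<in> C" using C'C by blast+
    then show "y \<bullet> (a' - b') \<le> wid C y" by (rule wid_ge[OF bC])
  qed
  have wge: "W \<le> wid C' y" if y: "y \<in> dual_lattice L - {0}" for y
  proof (cases "y \<bullet> (b - a) = 0")
    case False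
    have lw: "l \<le> wid C y" unfolding l_def using lemA[OF L bC ab(1,2)] y False by blast
    have "lam0 * (y \<bullet> (a' - b')) \<le> wid C' y" if "a' \<in> C" "b' \<in> C" for a' b'
    proof -
      have "lam0 *\<^sub>R a' + (1 - lam0) *\<^sub>R c \<in> C'" "lam0 *\<^sub>R b' + (1 - lam0) *\<^sub>R c \<in> C'"
        using that KC' unfolding K_def by auto
      from wid_ge[OF bC' this, of y] show ?thesis by (simp add: algebra_simps)
    qed
    then have "wid C y \<le> wid C' y / lam0" using lam Cne
      by (intro wid_le) (auto simp: field_simps mult.commute)
    then have "lam0 * wid C y \<le> wid C' y" using lam by (simp add: field_simps)
    moreover have "lam0 * l \<le> lam0 * wid C y" using lw lam by simp
    moreover have "W \<le> lam0 * l" using lam(3) Wl' by simp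
    ultimately show ?thesis by (meson order_trans)
  next
    case True
    have h1: "(b - a) \<bullet> y0 = 0" using y0(4) by (simp add: inner_commute)
    have h2: "(b - a) \<bullet> y = 0" using True by (simp add: inner_commute)
    obtain k where k: "y = k *\<^sub>R y0" using perp2[OF d0 y0(2) h1 h2] by blast
    have "wid C y \<le> \<bar>k\<bar> * wid C y0"
    proof (intro wid_le)
      show "C \<noteq> {}" using cinC by blast
      fix a' b' assume "a' \<in> C" "b' \<in> C"
      then have "\<bar>y0 \<bullet> (a' - b')\<bar> \<le> wid C y0" using wid_abs[OF bC] by blast
      then have "k * (y0 \<bullet> (a' - b')) \<le> \<bar>k\<bar> * wid C y0"
        by (metis abs_ge_self abs_mult abs_ge_zero mult_left_mono order_trans)
      then show "y \<bullet> (a' - b') \<le> \<bar>k\<bar> * wid C y0" using k by simp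
    qed
    moreover have "\<bar>y \<bullet> (p - q)\<bar> \<le> wid C' y" using wid_abs[OF bC' pqC'] .
    moreover have "\<bar>y \<bullet> (p - q)\<bar> = \<bar>k\<bar> * wid C y0" using k w0 wid_nonneg[OF bC Cne, of y0] by (simp add: abs_mult)
    moreover have "W \<le> wid C y" unfolding W_def using width_facts[OF L C] y by blast
    ultimately show ?thesis by linarith
  qed
  have "lattice_width L C' = W"
  proof (rule antisym)
    show "lattice_width L C' \<le> W" unfolding lw_eq W_def
    proof (rule cInf_mono)
      show "wid C ` (dual_lattice L - {0}) \<noteq> {}" using width_facts[OF L C] by blast
      show "bdd_below (wid C' ` (dual_lattice L - {0}))" using width_facts[OF L cbC'] by blast
      fix x assume "x \<in> wid C ` (dual_lattice L - {0})"
      then show "\<exists>a\<in>wid C' ` (dual_lattice L - {0}). a \<le> x" using wle by blast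
    qed
    show "W \<le> lattice_width L C'" unfolding lw_eq
      using width_facts(1)[OF L C] wge by (intro cInf_greatest) auto
  qed
  then show ?thesis unfolding lattice_reduced_def W_def using cbC' psub by blast
qed




lemma complete_case:
  assumes L: "is_lattice L" and C: "convex_body C" and lt: "lattice_width L C < lattice_diam L C"
  shows "\<not> lattice_complete L C"
proof -
  obtain a b y0 where ab: "lattice_segment L a b" "closed_segment a b \<subseteq> C"
    and y0: "y0 \<in> dual_lattice L" "y0 \<noteq> 0" "wid C y0 < lattice_length L a b" "y0 \<bullet> (b - a) = 0"
    and Wl: "lattice_width L C < lattice_length L a b" and Dl: "lattice_length L a b \<le> lattice_diam L C"
    by (rule common[OF L C lt])
  define D where "D = lattice_diam L C"
  define w0 where "w0 = wid C y0"
  have cC: "compact C" "convex C" "interior C \<noteq> {}" using C unfolding convex_body_def by auto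
  have bC: "bounded C" using cC compact_imp_bounded by blast
  have Cne: "C \<noteq> {}" using cC interior_subset by blast
  have W0: "0 \<le> lattice_width L C" using width_facts[OF L C] by blast
  have w0D: "w0 < D" using y0(3) Dl unfolding w0_def D_def by linarith
  have D0: "0 \<le> D" using W0 Wl Dl unfolding D_def by linarith
  have ab0: "a \<noteq> b" using ab unfolding lattice_segment_def by blast
  have d0: "b - a \<noteq> 0" using ab0 by simp
  define v0 where "v0 = primitive_vec L (b - a)"
  have po: "prim_ok L (b - a) v0" unfolding v0_def using seg_prim[OF L ab(1)] .
  then obtain c0 where c0: "c0 > 0" "v0 = c0 *\<^sub>R (b - a)" and v0L: "v0 \<in> L" "v0 \<noteq> 0"
    unfolding prim_ok_def by blast
  have y0v0: "y0 \<bullet> v0 = 0" using c0(2) y0(4) by simp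
  have spv0: "span {v0} = span {b - a}" using c0 span_scale1[of c0 "b - a"] by simp
  have seglen: "lattice_length L a' b' = \<bar>t\<bar>" if "a' \<noteq> b'" "b' - a' = t *\<^sub>R v0" for a' b' t
  proof -
    have t0: "t \<noteq> 0" using that by auto
    have "v0 = (1 / t) *\<^sub>R (t *\<^sub>R v0)" using t0 by simp
    then have pt: "prim_ok L (t *\<^sub>R v0) (primitive_vec L (t *\<^sub>R v0))"
      using prim_vec_ok[OF L v0L] by blast
    have "span {t *\<^sub>R v0} = span {b - a}" using span_scale1[OF t0, of v0] spv0 by simp
    then have "norm (primitive_vec L (t *\<^sub>R v0)) = norm v0" using prim_norm_eq[OF pt po] by simp
    then show ?thesis unfolding lattice_length_def that(2) using v0L by simp
  qed
  define CC where "CC = {x - y | x y. x \<in> C \<and> y \<in> C}"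
  define T where "T = CC \<inter> span {v0}"
  have cT: "compact T" unfolding T_def CC_def using compact_differences[OF cC(1) cC(1)]
    by (intro compact_Int_closed) auto
  obtain xc where xc: "xc \<in> C" using Cne by blast
  have T0: "0 \<in> T" unfolding T_def CC_def using xc by (auto intro: span_zero exI[of _ xc])
  have Tne: "T \<noteq> {}" using T0 by blast
  have "continuous_on T (\<lambda>z. z \<bullet> v0)" by (intro continuous_intros)
  from continuous_attains_sup[OF cT Tne this] obtain zs where zs: "zs \<in> T" "\<forall>z\<in>T. z \<bullet> v0 \<le> zs \<bullet> v0"
    by blast
  obtain \<mu> where \<mu>: "zs = \<mu> *\<^sub>R v0" using zs(1) unfolding T_def by (auto simp: span_singleton)
  obtain x1 x0 where x10: "x1 \<in> C" "x0 \<in> C" "zs = x1 - x0" using zs(1) unfolding T_def CC_def by blast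
  have vv: "v0 \<bullet> v0 > 0" using v0L by simp
  have \<mu>max: "t \<le> \<mu>" if "x \<in> C" "y \<in> C" "y - x = t *\<^sub>R v0" for x y t
  proof -
    have "y - x \<in> CC" unfolding CC_def using that(1,2) by blast
    moreover have "y - x \<in> span {v0}" unfolding that(3) by (simp add: span_mul span_base)
    ultimately have "y - x \<in> T" unfolding T_def by blast
    then have "(t *\<^sub>R v0) \<bullet> v0 \<le> (\<mu> *\<^sub>R v0) \<bullet> v0" using zs(2) \<mu> that(3) by metis
    then have "t * (v0 \<bullet> v0) \<le> \<mu> * (v0 \<bullet> v0)" by simp
    then show ?thesis using vv by simp
  qed
  have \<mu>0: "0 \<le> \<mu>"
  proof -
    have "0 \<bullet> v0 \<le> zs \<bullet> v0" using zs(2) T0 by blast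
    then have "0 \<le> \<mu> * (v0 \<bullet> v0)" using \<mu> by simp
    then show ?thesis using vv by (simp add: zero_le_mult_iff)
  qed
  have \<mu>D: "\<mu> \<le> D"
  proof (cases "\<mu> = 0")
    case True then show ?thesis using D0 by simp
  next
    case False
    have x1x0: "x1 - x0 = \<mu> *\<^sub>R v0" using x10 \<mu> by simp
    then have ne: "x0 \<noteq> x1" using False v0L by auto
    have seg: "lattice_segment L x0 x1" unfolding lattice_segment_def using ne v0L x1x0 by blast
    have sub: "closed_segment x0 x1 \<subseteq> C" using x10 cC(2) by (intro closed_segment_subset) auto
    have "lattice_length L x0 x1 = \<mu>" using seglen[OF ne x1x0] \<mu>0 by simp
    then have "\<mu> \<in> Dset L C" unfolding Dset_def using seg sub by force
    then show ?thesis unfolding D_def ld_eq using Dset_bdd[OF L bC] by (intro cSup_upper)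
  qed
  define T1 where "T1 = (\<lambda>x. x - \<mu> *\<^sub>R v0) ` C"
  have T1eq: "T1 = (+) (- (\<mu> *\<^sub>R v0)) ` C" unfolding T1_def by (intro image_cong) auto
  have cvT1: "convex T1" unfolding T1eq using cC(2) by (rule convex_translation)
  have T1ne: "T1 \<noteq> {}" unfolding T1_def using Cne by blast
  have disj: "interior C \<inter> T1 = {}"
  proof (rule ccontr)
    assume "interior C \<inter> T1 \<noteq> {}"
    then obtain z where z: "z \<in> interior C" "z \<in> T1" by blast
    then obtain x where x: "x \<in> C" "z = x - \<mu> *\<^sub>R v0" unfolding T1_def by blast
    obtain r where r: "r > 0" "ball z r \<subseteq> C" using z(1) mem_interior by blast
    define \<delta> where "\<delta> = r / (2 * norm v0)"
    have \<delta>: "\<delta> > 0" unfolding \<delta>_def using r v0L by simp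
    have "norm (\<delta> *\<^sub>R v0) = r / 2" unfolding \<delta>_def using v0L r by simp
    then have "z - \<delta> *\<^sub>R v0 \<in> ball z r" using r by (simp add: dist_norm)
    then have z'C: "z - \<delta> *\<^sub>R v0 \<in> C" using r by blast
    have "x - (z - \<delta> *\<^sub>R v0) = (\<mu> + \<delta>) *\<^sub>R v0" using x(2) by (simp add: algebra_simps)
    from \<mu>max[OF z'C x(1) this] \<delta> show False by simp
  qed
  obtain f \<beta> where f: "f \<noteq> 0" "\<forall>x\<in>interior C. f \<bullet> x \<le> \<beta>" "\<forall>x\<in>T1. \<beta> \<le> f \<bullet> x"
    using separating_hyperplane_sets[OF convex_interior[OF cC(2)] cvT1 cC(3) T1ne disj] by blast
  have "interior C \<subseteq> {x. f \<bullet> x \<le> \<beta>}" using f(2) by blast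
  then have "closure (interior C) \<subseteq> {x. f \<bullet> x \<le> \<beta>}" by (intro closure_minimal closed_halfspace_le)
  moreover have "closure (interior C) = C"
    using convex_closure_interior[OF cC(2,3)] cC(1) by (simp add: compact_imp_closed closure_closed)
  ultimately have fC: "\<And>x. x \<in> C \<Longrightarrow> f \<bullet> x \<le> \<beta>" by blast
  have fC2: "\<beta> + \<mu> * (f \<bullet> v0) \<le> f \<bullet> x" if "x \<in> C" for x
  proof -
    have "x - \<mu> *\<^sub>R v0 \<in> T1" unfolding T1_def using that by blast
    then have "\<beta> \<le> f \<bullet> (x - \<mu> *\<^sub>R v0)" using f(3) by blast
    then show ?thesis by (simp add: inner_diff_right)
  qed
  define \<phi> where "\<phi> = - \<mu> * (f \<bullet> v0)"
  have fab: "f \<bullet> (x - y) \<le> \<phi>" if "x \<in> C" "y \<in> C" for x y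
    using fC[OF that(1)] fC2[OF that(2)] unfolding \<phi>_def by (simp add: inner_diff_right)
  have \<phi>pos: "\<phi> > 0"
  proof -
    obtain c where c: "c \<in> interior C" using cC(3) by blast
    then obtain r where r: "r > 0" "ball c r \<subseteq> C" using mem_interior by blast
    define t where "t = r / (2 * norm f)"
    have t: "t > 0" unfolding t_def using r f(1) by simp
    have "norm (t *\<^sub>R f) = r / 2" unfolding t_def using f(1) r by simp
    then have "c + t *\<^sub>R f \<in> ball c r" using r by (simp add: dist_norm)
    then have i1: "c + t *\<^sub>R f \<in> C" using r by blast
    have cinC: "c \<in> C" using r by auto
    have "f \<bullet> ((c + t *\<^sub>R f) - c) = t * (f \<bullet> f)" by (simp add: algebra_simps)
    moreover have "t * (f \<bullet> f) > 0" using t f(1) by simp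
    ultimately show ?thesis using fab[OF i1 cinC] by linarith
  qed
  have fv0: "f \<bullet> v0 < 0" and \<mu>pos: "\<mu> > 0"
  proof -
    have "\<mu> * (f \<bullet> v0) < 0" using \<phi>pos unfolding \<phi>_def by simp
    then show "f \<bullet> v0 < 0" "\<mu> > 0" using \<mu>0 by (auto simp: mult_less_0_iff)
  qed
  define N where "N = norm y0 * norm (rot f)"
  have N0: "0 \<le> N" unfolding N_def by simp
  define \<epsilon> where "\<epsilon> = (D - w0) / (N + 1)"
  have \<epsilon>: "\<epsilon> > 0" unfolding \<epsilon>_def using w0D N0 by simp
  define e where "e = \<epsilon> *\<^sub>R rot f"
  have fe: "f \<bullet> e = 0" unfolding e_def using rot_inner[of f] by (simp add: inner_commute)
  have e0: "e \<noteq> 0" unfolding e_def using \<epsilon> rot_nz[OF f(1)] by simp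
  have ye: "\<bar>y0 \<bullet> e\<bar> < D - w0"
  proof -
    have "\<bar>y0 \<bullet> e\<bar> \<le> norm y0 * norm e" by (rule Cauchy_Schwarz_ineq2)
    also have "\<dots> = \<epsilon> * N" unfolding e_def N_def using \<epsilon> by simp
    also have "\<dots> < D - w0" unfolding \<epsilon>_def using w0D N0 by (simp add: field_simps)
    finally show ?thesis .
  qed
  define C' where "C' = {x + s | x s. x \<in> C \<and> s \<in> closed_segment 0 e}"
  have seg0: "s \<in> closed_segment 0 e \<longleftrightarrow> (\<exists>t. 0 \<le> t \<and> t \<le> 1 \<and> s = t *\<^sub>R e)" for s
    unfolding closed_segment_def by auto
  have memC': "\<exists>x t. x \<in> C \<and> 0 \<le> t \<and> t \<le> 1 \<and> p = x + t *\<^sub>R e" if "p \<in> C'" for p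
    using that unfolding C'_def seg0 by blast
  have compC': "compact C'" unfolding C'_def using cC(1) by (intro compact_sums) auto
  have "C' = (\<Union>x\<in>C. \<Union>y\<in>closed_segment 0 e. {x + y})" unfolding C'_def by blast
  then have cvC': "convex C'" using convex_sums[OF cC(2) convex_closed_segment] by simp
  have CC': "C \<subseteq> C'"
  proof
    fix x assume "x \<in> C"
    moreover have "x = x + 0" by simp
    ultimately show "x \<in> C'" unfolding C'_def using ends_in_segment(1)[of 0 e] by blast
  qed
  have "C' \<noteq> C"
  proof
    assume eq: "C' = C"
    have "continuous_on C (\<lambda>x. e \<bullet> x)" by (intro continuous_intros)
    from continuous_attains_sup[OF cC(1) Cne this] obtain m where m: "m \<in> C" "\<forall>x\<in>C. e \<bullet> x \<le> e \<bullet> m"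
      by blast
    have "m + e \<in> C'" unfolding C'_def using m(1) ends_in_segment(2)[of 0 e] by blast
    then have "e \<bullet> (m + e) \<le> e \<bullet> m" using m(2) eq by blast
    moreover have "e \<bullet> e > 0" using e0 by simp
    ultimately show False by (simp add: inner_add_right)
  qed
  then have psup: "C \<subset> C'" using CC' by blast
  have intC': "interior C' \<noteq> {}" using interior_mono[OF CC'] cC(3) by blast
  have cbC': "convex_body C'" unfolding convex_body_def using compC' cvC' intC' by simp
  have bC': "bounded C'" using compC' compact_imp_bounded by blast
  have C'ne: "C' \<noteq> {}" using CC' Cne by blast
  have DD': "Dset L C \<subseteq> Dset L C'" unfolding Dset_def using CC' by blast
  have ge: "D \<le> lattice_diam L C'" unfolding D_def ld_eq
    by (rule cSup_subset_mono[OF Dset_ne[OF L cC(3)] Dset_bdd[OF L bC'] DD'])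
  have wC'y0: "wid C' y0 \<le> w0 + \<bar>y0 \<bullet> e\<bar>"
  proof (rule wid_le[OF C'ne])
    fix p1 p2 assume "p1 \<in> C'" "p2 \<in> C'"
    then obtain x1 t1 x2 t2 where p: "x1 \<in> C" "0 \<le> t1" "t1 \<le> 1" "p1 = x1 + t1 *\<^sub>R e"
      "x2 \<in> C" "0 \<le> t2" "t2 \<le> 1" "p2 = x2 + t2 *\<^sub>R e" using memC' by metis
    have "y0 \<bullet> (p1 - p2) = y0 \<bullet> (x1 - x2) + (t1 - t2) * (y0 \<bullet> e)" unfolding p(4,8)
      by (simp add: algebra_simps)
    also have "\<dots> \<le> w0 + \<bar>y0 \<bullet> e\<bar>"
    proof -
      have "y0 \<bullet> (x1 - x2) \<le> w0" unfolding w0_def using wid_ge[OF bC p(1,5)] .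
      moreover have "(t1 - t2) * (y0 \<bullet> e) \<le> \<bar>t1 - t2\<bar> * \<bar>y0 \<bullet> e\<bar>" by (metis abs_ge_self abs_mult)
      moreover have "\<bar>t1 - t2\<bar> * \<bar>y0 \<bullet> e\<bar> \<le> 1 * \<bar>y0 \<bullet> e\<bar>" using p by (intro mult_right_mono) auto
      ultimately show ?thesis by linarith
    qed
    finally show "y0 \<bullet> (p1 - p2) \<le> w0 + \<bar>y0 \<bullet> e\<bar>" .
  qed
  have le: "lattice_diam L C' \<le> D" unfolding ld_eq
  proof (rule cSup_least[OF Dset_ne[OF L intC']])
    fix l' assume "l' \<in> Dset L C'"
    then obtain a' b' where ab': "l' = lattice_length L a' b'" "lattice_segment L a' b'" "closed_segment a' b' \<subseteq> C'"
      unfolding Dset_def by blast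
    show "l' \<le> D"
    proof (cases "y0 \<bullet> (b' - a') = 0")
      case False
      have "l' \<le> wid C' y0" using lemA[OF L bC' ab'(2,3) y0(1) False] ab'(1) by simp
      then show ?thesis using wC'y0 ye by linarith
    next
      case True
      obtain t where t: "b' - a' = t *\<^sub>R v0" using perp2[OF y0(2) v0L(2) y0v0 True] by blast
      have ne': "a' \<noteq> b'" using ab'(2) unfolding lattice_segment_def by blast
      have l't: "l' = \<bar>t\<bar>" using seglen[OF ne' t] ab'(1) by simp
      have "a' \<in> C'" "b' \<in> C'" using ab'(3) by auto
      then obtain x1 t1 x2 t2 where p: "x1 \<in> C" "a' = x1 + t1 *\<^sub>R e" "x2 \<in> C" "b' = x2 + t2 *\<^sub>R e"
        using memC' by metis
      have "f \<bullet> (b' - a') = f \<bullet> (x2 - x1) + (t2 - t1) * (f \<bullet> e)" unfolding p(2,4)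
        by (simp add: algebra_simps)
      then have ff: "t * (f \<bullet> v0) = f \<bullet> (x2 - x1)" using fe t by simp
      have "f \<bullet> (x2 - x1) \<le> \<phi>" "f \<bullet> (x1 - x2) \<le> \<phi>" using fab p(1,3) by auto
      then have "\<bar>f \<bullet> (x2 - x1)\<bar> \<le> \<phi>" by (simp add: inner_diff_right)
      moreover have "\<bar>t\<bar> * \<bar>f \<bullet> v0\<bar> = \<bar>f \<bullet> (x2 - x1)\<bar>" using ff by (metis abs_mult)
      moreover have "\<mu> * \<bar>f \<bullet> v0\<bar> = \<phi>" unfolding \<phi>_def using fv0 by simp
      ultimately have "\<bar>t\<bar> * \<bar>f \<bullet> v0\<bar> \<le> \<mu> * \<bar>f \<bullet> v0\<bar>" by linarith
      moreover have "\<bar>f \<bullet> v0\<bar> > 0" using fv0 by simp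
      ultimately have "\<bar>t\<bar> \<le> \<mu>" by (meson mult_le_cancel_right_pos)
      then show ?thesis using l't \<mu>D by linarith
    qed
  qed
  have "lattice_diam L C' = lattice_diam L C" using ge le unfolding D_def by linarith
  then show ?thesis unfolding lattice_complete_def using cbC' psup by blast
qed



theorem proposition5p1:
  fixes L C :: "(real^2) set"
  assumes "is_lattice L"
    and "convex_body C"
    and "lattice_reduced L C \<or> lattice_complete L C"
  shows "lattice_diam L C \<le> lattice_width L C"
proof (rule ccontr)
  assume "\<not> lattice_diam L C \<le> lattice_width L C"
  then have lt: "lattice_width L C < lattice_diam L C" by simp
  show False using assms(3) reduced_case[OF assms(1,2) lt] complete_case[OF assms(1,2) lt] by blast
qed

end
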